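(* Let $\Sigma,T$ be finite. The guarded languages (over $(\Sigma,T)$) recognized by deterministic KAT automata over $(\Sigma,T)$ are precisely the deterministic regular guarded languages over $(\Sigma,T)$.
   Context: Atoms $\mathsf{At}_T=2^T$. Guarded strings over $(\Sigma,T)$ are words in $\mathsf{At}_T(\Sigma\mathsf{At}_T)^*$; a guarded language is a set of guarded strings; it is regular if it is a regular language over the finite alphabet $\mathsf{At}_T\cup\Sigma$. A guarded language $L$ is deterministic if for all distinct $w,w'\in L$: (i) $w$ is not a proper prefix of $w'$, (ii) the first position where $w,w'$ differ is an atom. A deterministic KAT automaton over $(\Sigma,T)$ is $A=(Q,\delta,\iota)$ with $Q$ finite, $\delta:Q\times\mathsf{At}_T\to\{\mathsf{accept},\mathsf{reject}\}+\Sigma\times Q$, $\iota:\mathsf{At}_T\to\{\mathsf{accept},\mathsf{reject}\}+\Sigma\times Q$. For $\gamma:\mathsf{At}_T\to\{\mathsf{accept},\mathsf{reject}\}+\Sigma\times Q$, $L_A(\gamma)$ is the smallest set such that $\gamma(\alpha)=\mathsf{accept}$ implies $\alpha\in L_A(\gamma)$, and $\gamma(\alpha)=(p,q)$ with $w\in L_A(\delta(q,-))$ implies $\alpha pw\in L_A(\gamma)$. The language recognized by $A$ is $L(A)=L_A(\iota)$. *)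

theory Defs
  imports Main "HOL-Library.Sublist"
begin

text \<open>Atoms At_T = 2^T are represented by the type 't set (T = UNIV :: 't set, finite).
 The alphabet At_T \<union> \<Sigma> is the disjoint sum 't set + 's: letters Inl \<alpha> are atoms,
 letters Inr p are actions.\<close>

type_synonym ('s, 't) letter = "'t set + 's"

fun guarded_string :: "('s, 't) letter list \<Rightarrow> bool" where
  "guarded_string [Inl \<alpha>] = True"
| "guarded_string (Inl \<alpha> # Inr p # w) = guarded_string w"
| "guarded_string _ = False"

definition guarded_lang :: "('s, 't) letter list set \<Rightarrow> bool" where
  "guarded_lang L \<longleftrightarrow> (\<forall>w\<in>L. guarded_string w)"

definition regular_lang :: "'a list set \<Rightarrow> bool" where
  "regular_lang L \<longleftrightarrow> (\<exists>(Q :: nat set) q0 (d :: nat \<Rightarrow> 'a \<Rightarrow> nat) F.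
      finite Q \<and> q0 \<in> Q \<and> (\<forall>q\<in>Q. \<forall>a. d q a \<in> Q) \<and> F \<subseteq> Q \<and>
      L = {w. foldl d q0 w \<in> F})"

definition deterministic_lang :: "('s, 't) letter list set \<Rightarrow> bool" where
  "deterministic_lang L \<longleftrightarrow> (\<forall>w\<in>L. \<forall>w'\<in>L. w \<noteq> w' \<longrightarrow>
      \<not> strict_prefix w w' \<and>
      (\<forall>i. i < length w \<and> i < length w' \<and> w ! i \<noteq> w' ! i \<and> (\<forall>j<i. w ! j = w' ! j)
           \<longrightarrow> isl (w ! i) \<and> isl (w' ! i)))"

datatype ('s, 'q) kat_res = Accept | Reject | Go 's 'q

inductive kat_acc :: "('q \<Rightarrow> 't set \<Rightarrow> ('s, 'q) kat_res) \<Rightarrow> ('t set \<Rightarrow> ('s, 'q) kat_res)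
                      \<Rightarrow> ('s, 't) letter list \<Rightarrow> bool" for \<delta> where
  acc_accept: "\<gamma> \<alpha> = Accept \<Longrightarrow> kat_acc \<delta> \<gamma> [Inl \<alpha>]"
| acc_step: "\<gamma> \<alpha> = Go p q \<Longrightarrow> kat_acc \<delta> (\<delta> q) w \<Longrightarrow> kat_acc \<delta> \<gamma> (Inl \<alpha> # Inr p # w)"

definition kat_lang :: "('q \<Rightarrow> 't set \<Rightarrow> ('s, 'q) kat_res) \<Rightarrow> ('t set \<Rightarrow> ('s, 'q) kat_res)
                       \<Rightarrow> ('s, 't) letter list set" where
  "kat_lang \<delta> \<iota> = {w. kat_acc \<delta> \<iota> w}"

definition kat_automaton :: "nat set \<Rightarrow> (nat \<Rightarrow> 't set \<Rightarrow> ('s, nat) kat_res)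
                              \<Rightarrow> ('t set \<Rightarrow> ('s, nat) kat_res) \<Rightarrow> bool" where
  "kat_automaton Q \<delta> \<iota> \<longleftrightarrow> finite Q \<and>
     (\<forall>\<alpha> p q. \<iota> \<alpha> = Go p q \<longrightarrow> q \<in> Q) \<and>
     (\<forall>q'\<in>Q. \<forall>\<alpha> p q. \<delta> q' \<alpha> = Go p q \<longrightarrow> q \<in> Q)"

end

theory Submission
  imports Defs
begin

lemma regular_any:
  fixes Q :: "'b set" and d :: "'b \<Rightarrow> 'a \<Rightarrow> 'b"
  assumes fin: "finite Q" and q0: "q0 \<in> Q" and cl: "\<forall>q\<in>Q. \<forall>a. d q a \<in> Q"
    and FQ: "F \<subseteq> Q" and L: "L = {w. foldl d q0 w \<in> F}"
  shows "regular_lang L"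
proof -
  obtain f :: "'b \<Rightarrow> nat" and n where f: "inj_on f Q"
    using finite_imp_inj_to_nat_seg[OF fin] by blast
  define g where "g = inv_into Q f"
  define d' where "d' m a = f (d (g m) a)" for m a
  have foldin: "q \<in> Q \<Longrightarrow> foldl d q w \<in> Q" for q w
    using cl by (induction w arbitrary: q) auto
  have fold': "q \<in> Q \<Longrightarrow> foldl d' (f q) w = f (foldl d q w)" for q w
  proof (induction w arbitrary: q)
    case Nil then show ?case by simp
  next
    case (Cons a w)
    have "d' (f q) a = f (d q a)" unfolding d'_def g_def using Cons.prems f by simp
    then show ?case using Cons cl by simp
  qed
  show ?thesis unfolding regular_lang_def
  proof (intro exI conjI)
    show "finite (f ` Q)" using fin by simp
    show "f q0 \<in> f ` Q" using q0 by simp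
    show "\<forall>q\<in>f ` Q. \<forall>a. d' q a \<in> f ` Q"
      unfolding d'_def g_def using cl by (auto simp: f inv_into_into)
    show "f ` F \<subseteq> f ` Q" using FQ by auto
    show "L = {w. foldl d' (f q0) w \<in> f ` F}"
      unfolding L using fold'[OF q0] foldin[OF q0] inj_on_image_mem_iff[OF f _ FQ] by auto
  qed
qed

lemma acc_guarded: "kat_acc \<delta> \<gamma> w \<Longrightarrow> guarded_string w"
  by (induction rule: kat_acc.induct) auto

lemma acc_det:
  assumes "kat_acc \<delta> \<gamma> w"
  shows "kat_acc \<delta> \<gamma> w' \<Longrightarrow> w \<noteq> w' \<Longrightarrow> \<not> strict_prefix w w' \<and>
      (\<forall>i. i < length w \<and> i < length w' \<and> w ! i \<noteq> w' ! i \<and> (\<forall>j<i. w ! j = w' ! j)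
           \<longrightarrow> isl (w ! i) \<and> isl (w' ! i))"
  using assms
proof (induction arbitrary: w' rule: kat_acc.induct)
  case (acc_accept \<gamma> \<alpha>)
  from acc_accept.prems(1) show ?case
  proof cases
    case (acc_accept \<beta>) then show ?thesis using acc_accept.prems by (auto simp: less_Suc_eq)
  next
    case (acc_step \<beta> p q v)
    then show ?thesis using acc_accept.hyps
      by (auto simp: nth_Cons' split: if_splits)
  qed
next
  case (acc_step \<gamma> \<alpha> p q w)
  note H = acc_step.hyps and IH0 = acc_step.IH and P = acc_step.prems
  from P(1) show ?case
  proof cases
    case (acc_accept \<beta>) then show ?thesis using H
      by (auto simp: nth_Cons' split: if_splits)
  next
    case (acc_step \<beta> p' q' v)
    note c = this
    show ?thesis
    proof (cases "\<alpha> = \<beta>")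
      case False then show ?thesis using c(1) by (auto simp: nth_Cons')
    next
      case True
      then have pq: "p' = p" "q' = q" using c H by auto
      have ne: "w \<noteq> v" using P c(1) True pq by auto
      from IH0[OF _ ne] c(3) pq have IH: "\<not> strict_prefix w v \<and>
      (\<forall>i. i < length w \<and> i < length v \<and> w ! i \<noteq> v ! i \<and> (\<forall>j<i. w ! j = v ! j)
           \<longrightarrow> isl (w ! i) \<and> isl (v ! i))" by simp
      show ?thesis
      proof (intro conjI allI impI)
        show "\<not> strict_prefix (Inl \<alpha> # Inr p # w) w'"
          using IH c(1) True pq by auto
        fix i assume i: "i < length (Inl \<alpha> # Inr p # w) \<and> i < length w' \<and>
          (Inl \<alpha> # Inr p # w) ! i \<noteq> w' ! i \<and> (\<forall>j<i. (Inl \<alpha> # Inr p # w) ! j = w' ! j)"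
        have "i \<noteq> 0" using i c(1) True pq by (metis nth_Cons_0)
        moreover have "i \<noteq> 1" using i c(1) True pq by (metis One_nat_def nth_Cons_0 nth_Cons_Suc)
        ultimately obtain k where k: "i = Suc (Suc k)"
          by (metis One_nat_def not0_implies_Suc)
        have "\<forall>j<k. w ! j = v ! j"
        proof (intro allI impI)
          fix j assume "j < k"
          then have "Suc (Suc j) < i" using k by simp
          then show "w ! j = v ! j" using i c(1) by fastforce
        qed
        then have "isl (w ! k) \<and> isl (v ! k)" using IH i k c(1) by auto
        then show "isl ((Inl \<alpha> # Inr p # w) ! i)" "isl (w' ! i)"
          using k c(1) by simp_all
      qed
    qed
  qed
qed


datatype ('g, 's) dst = SA 'g | SB 's nat | SAcc | SSink

fun dstep :: "(nat \<Rightarrow> 't set \<Rightarrow> ('s, nat) kat_res) \<Rightarrow>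
    ('t set \<Rightarrow> ('s, nat) kat_res, 's) dst \<Rightarrow> ('s, 't) letter \<Rightarrow> ('t set \<Rightarrow> ('s, nat) kat_res, 's) dst" where
  "dstep \<delta> (SA \<gamma>) (Inl \<alpha>) = (case \<gamma> \<alpha> of Accept \<Rightarrow> SAcc | Reject \<Rightarrow> SSink | Go p q \<Rightarrow> SB p q)"
| "dstep \<delta> (SB p q) (Inr p') = (if p = p' then SA (\<delta> q) else SSink)"
| "dstep \<delta> _ _ = SSink"

lemma fold_sink: "foldl (dstep \<delta>) SSink w = SSink"
  by (induction w) auto

lemma fold_acc: "foldl (dstep \<delta>) SAcc w = SAcc \<longleftrightarrow> w = []"
  by (cases w) (auto simp: fold_sink)

lemma kat_acc_Nil: "\<not> kat_acc \<delta> \<gamma> []"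
  by (auto elim: kat_acc.cases)

lemma fold_SA: "foldl (dstep \<delta>) (SA \<gamma>) w = SAcc \<longleftrightarrow> kat_acc \<delta> \<gamma> w"
proof (induction "length w" arbitrary: w \<gamma> rule: less_induct)
  case less
  show ?case
  proof (cases w)
    case Nil then show ?thesis by (simp add: kat_acc_Nil)
  next
    case (Cons a r)
    show ?thesis
    proof (cases a)
      case (Inr p)
      then show ?thesis using Cons by (auto simp: fold_sink elim: kat_acc.cases)
    next
      case (Inl \<alpha>)
      show ?thesis
      proof (cases "\<gamma> \<alpha>")
        case Accept
        then show ?thesis using Cons Inl
          by (auto simp: fold_acc intro: kat_acc.intros elim: kat_acc.cases)
      next
        case Reject
        then show ?thesis using Cons Inl
          by (auto simp: fold_sink elim: kat_acc.cases)
      next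
        case (Go p q)
        show ?thesis
        proof (cases r)
          case Nil then show ?thesis using Cons Inl Go
            by (auto elim: kat_acc.cases)
        next
          case (Cons b r')
          note C2 = this
          show ?thesis
          proof (cases b)
            case (Inl x)
            then show ?thesis using Cons C2 `w = a # r` Inl `a = Inl \<alpha>` Go
              by (auto simp: fold_sink elim: kat_acc.cases)
          next
            case (Inr p')
            have IH: "foldl (dstep \<delta>) (SA (\<delta> q)) r' = SAcc \<longleftrightarrow> kat_acc \<delta> (\<delta> q) r'"
              using less[of r'] `w = a # r` C2 by simp
            show ?thesis
            proof (cases "p = p'")
              case True
              then show ?thesis using IH `w = a # r` C2 Inr `a = Inl \<alpha>` Go
                by (auto intro: kat_acc.intros elim: kat_acc.cases)
            next
              case False
              then show ?thesis using `w = a # r` C2 Inr `a = Inl \<alpha>` Go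
                by (auto simp: fold_sink elim: kat_acc.cases)
            qed
          qed
        qed
      qed
    qed
  qed
qed

lemma kat_regular:
  fixes \<delta> :: "nat \<Rightarrow> 't::finite set \<Rightarrow> ('s::finite, nat) kat_res"
  assumes A: "kat_automaton Q \<delta> \<iota>"
  shows "regular_lang (kat_lang \<delta> \<iota>)"
proof (rule regular_any)
  let ?Q = "{SA \<iota>} \<union> SA ` \<delta> ` Q \<union> (\<lambda>(p, q). SB p q) ` ((UNIV :: 's set) \<times> Q) \<union> {SAcc, SSink}"
  show "finite ?Q" using A unfolding kat_automaton_def by (auto intro!: finite_imageI finite_cartesian_product)
  show "SA \<iota> \<in> ?Q" by simp
  show "\<forall>q\<in>?Q. \<forall>a. dstep \<delta> q a \<in> ?Q"
  proof (intro ballI allI)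
    fix s :: "('t set \<Rightarrow> ('s, nat) kat_res, 's) dst" and a assume s: "s \<in> ?Q"
    show "dstep \<delta> s a \<in> ?Q"
    proof (cases "\<exists>\<gamma> \<alpha>. s = SA \<gamma> \<and> a = Inl \<alpha>")
      case True
      then obtain \<gamma> \<alpha> where g: "s = SA \<gamma>" "a = Inl \<alpha>" by blast
      have "\<gamma> = \<iota> \<or> \<gamma> \<in> \<delta> ` Q" using s g by auto
      then show ?thesis using A g unfolding kat_automaton_def
        by (cases "\<gamma> \<alpha>") auto
    next
      case False
      then show ?thesis using s
        by (cases s; cases a) auto
    qed
  qed
  show "{SAcc} \<subseteq> ?Q" by simp
  show "kat_lang \<delta> \<iota> = {w. foldl (dstep \<delta>) (SA \<iota>) w \<in> {SAcc}}"
    unfolding kat_lang_def by (simp add: fold_SA)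
qed


definition k\<delta> :: "(nat \<Rightarrow> ('s, 't) letter \<Rightarrow> nat) \<Rightarrow> nat set \<Rightarrow> nat \<Rightarrow> 't set \<Rightarrow> ('s, nat) kat_res" where
  "k\<delta> d F q \<alpha> = (if d q (Inl \<alpha>) \<in> F then Accept
     else if (\<exists>p v. foldl d (d (d q (Inl \<alpha>)) (Inr p)) v \<in> F)
     then Go (SOME p. \<exists>v. foldl d (d (d q (Inl \<alpha>)) (Inr p)) v \<in> F)
             (d (d q (Inl \<alpha>)) (Inr (SOME p. \<exists>v. foldl d (d (d q (Inl \<alpha>)) (Inr p)) v \<in> F)))
     else Reject)"

fun apre :: "('s, 't) letter list \<Rightarrow> bool" where
  "apre [] = True"
| "apre (Inl \<alpha> # Inr p # u) = apre u"
| "apre _ = False"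

lemma apre_guarded: "apre u \<Longrightarrow> guarded_string (u @ w) = guarded_string w"
  by (induction u rule: apre.induct) auto

lemma apre_snoc: "apre u \<Longrightarrow> apre (u @ [Inl \<alpha>, Inr p])"
  by (induction u rule: apre.induct) auto

lemma guarded_cases:
  "guarded_string w \<Longrightarrow> (\<exists>\<alpha>. w = [Inl \<alpha>]) \<or> (\<exists>\<alpha> p w'. w = Inl \<alpha> # Inr p # w')"
  by (induction w rule: guarded_string.induct) auto

lemma det_diff:
  assumes "deterministic_lang L" "x @ a # y \<in> L" "x @ b # z \<in> L" "a \<noteq> b"
  shows "isl a \<and> isl b"
proof -
  have "x @ a # y \<noteq> x @ b # z" using assms(4) by simp
  then show ?thesis using assms(1-3) unfolding deterministic_lang_def
    apply -
    apply (drule bspec[OF _ assms(2)], drule bspec[OF _ assms(3)])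
    apply (drule mp, assumption)
    apply (drule conjunct2, drule spec[of _ "length x"])
    using assms(4) by (auto simp: nth_append)
qed

lemma det_pref:
  assumes "deterministic_lang L" "w \<in> L" "w @ v \<in> L" "v \<noteq> []"
  shows False
proof -
  have "strict_prefix w (w @ v)" using assms(4) by (simp add: strict_prefix_def)
  moreover have "w \<noteq> w @ v" using assms(4) by simp
  ultimately show False using assms(1-3) unfolding deterministic_lang_def by blast
qed

lemma k_sound:
  assumes "kat_acc (k\<delta> d F) \<gamma> w"
  shows "\<gamma> = k\<delta> d F (foldl d q0 u) \<Longrightarrow> foldl d q0 (u @ w) \<in> F"
  using assms
proof (induction arbitrary: u rule: kat_acc.induct)
  case (acc_accept \<gamma> \<alpha>)
  then show ?case by (auto simp: k\<delta>_def split: if_splits)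
next
  case (acc_step \<gamma> \<alpha> p q w)
  have "q = foldl d q0 (u @ [Inl \<alpha>, Inr p])"
    using acc_step by (auto simp: k\<delta>_def split: if_splits)
  then have "foldl d q0 ((u @ [Inl \<alpha>, Inr p]) @ w) \<in> F" using acc_step.IH by blast
  then show ?case by simp
qed

lemma k_complete:
  assumes det: "deterministic_lang L" and L: "L = {w. foldl d q0 w \<in> F}" and g: "guarded_lang L"
  shows "apre u \<Longrightarrow> u @ w \<in> L \<Longrightarrow> kat_acc (k\<delta> d F) (k\<delta> d F (foldl d q0 u)) w"
proof (induction "length w" arbitrary: w u rule: less_induct)
  case less
  have "guarded_string (u @ w)" using g less.prems(2) unfolding guarded_lang_def by blast
  then have gw: "guarded_string w" using apre_guarded[OF less.prems(1)] by simp
  consider (one) \<alpha> where "w = [Inl \<alpha>]" | (two) \<alpha> p w' where "w = Inl \<alpha> # Inr p # w'"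
    using guarded_cases[OF gw] by blast
  then show ?case
  proof cases
    case one
    then have "k\<delta> d F (foldl d q0 u) \<alpha> = Accept" using less.prems L by (simp add: k\<delta>_def)
    then show ?thesis using one by (simp add: kat_acc.intros)
  next
    case two
    let ?q = "foldl d q0 u"
    let ?s = "d ?q (Inl \<alpha>)"
    have nF: "?s \<notin> F"
    proof
      assume "?s \<in> F"
      then have "u @ [Inl \<alpha>] \<in> L" using L by simp
      moreover have "(u @ [Inl \<alpha>]) @ (Inr p # w') \<in> L" using less.prems two by simp
      ultimately show False using det_pref[OF det] by blast
    qed
    have "foldl d (d ?s (Inr p)) w' \<in> F"
      using less.prems(2) two L by simp
    then have ex: "\<exists>p v. foldl d (d ?s (Inr p)) v \<in> F" by blast
    define p0 where "p0 = (SOME p. \<exists>v. foldl d (d ?s (Inr p)) v \<in> F)"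
    have "\<exists>v. foldl d (d ?s (Inr p0)) v \<in> F" unfolding p0_def using ex by (rule someI_ex)
    then obtain v where v: "foldl d (d ?s (Inr p0)) v \<in> F" by blast
    have "p0 = p"
    proof (rule ccontr)
      assume ne: "p0 \<noteq> p"
      have "(u @ [Inl \<alpha>]) @ Inr p0 # v \<in> L" using v L by simp
      moreover have "(u @ [Inl \<alpha>]) @ Inr p # w' \<in> L" using less.prems two by simp
      ultimately show False using det_diff[OF det, of "u @ [Inl \<alpha>]" "Inr p0" v "Inr p" w'] ne by simp
    qed
    have kd: "k\<delta> d F ?q \<alpha> = Go p (d ?s (Inr p))"
      using nF ex `p0 = p` unfolding k\<delta>_def p0_def by (simp only: if_False if_True)
    have IH: "kat_acc (k\<delta> d F) (k\<delta> d F (foldl d q0 (u @ [Inl \<alpha>, Inr p]))) w'"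
    proof (rule less.hyps)
      show "length w' < length w" using two by simp
      show "apre (u @ [Inl \<alpha>, Inr p])" by (rule apre_snoc[OF less.prems(1)])
      show "(u @ [Inl \<alpha>, Inr p]) @ w' \<in> L" using less.prems(2) two by simp
    qed
    show ?thesis using two kd IH by (auto intro: kat_acc.acc_step)
  qed
qed


lemma k_automaton:
  assumes "finite Q" "q0 \<in> Q" "\<forall>q\<in>Q. \<forall>a. d q a \<in> Q"
  shows "kat_automaton Q (k\<delta> d F) (k\<delta> d F q0)"
proof -
  have *: "q' \<in> Q" if "k\<delta> d F q \<alpha> = Go p q'" "q \<in> Q" for q \<alpha> p q'
  proof -
    have "q' = d (d q (Inl \<alpha>)) (Inr p)" using that(1) unfolding k\<delta>_def
      by (simp split: if_splits; metis)
    moreover have "d q (Inl \<alpha>) \<in> Q" using assms(3) that(2) by blast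
    ultimately show ?thesis using assms(3) by blast
  qed
  show ?thesis unfolding kat_automaton_def using assms(1,2) * by blast
qed

theorem proposition4p12:
  fixes dummy :: "'s::finite \<times> 't::finite"
  shows "{kat_lang \<delta> \<iota> | (Q :: nat set) (\<delta> :: nat \<Rightarrow> 't set \<Rightarrow> ('s, nat) kat_res) \<iota>.
            kat_automaton Q \<delta> \<iota>}
       = {L :: ('s, 't) letter list set. guarded_lang L \<and> deterministic_lang L \<and> regular_lang L}"
proof (intro equalityI subsetI)
  fix L :: "('s, 't) letter list set"
  assume "L \<in> {kat_lang \<delta> \<iota> | (Q :: nat set) (\<delta> :: nat \<Rightarrow> 't set \<Rightarrow> ('s, nat) kat_res) \<iota>.
            kat_automaton Q \<delta> \<iota>}"
  then obtain Q and \<delta> :: "nat \<Rightarrow> 't set \<Rightarrow> ('s, nat) kat_res" and \<iota>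
    where A: "kat_automaton Q \<delta> \<iota>" and L: "L = kat_lang \<delta> \<iota>" by blast
  have "guarded_lang L" unfolding L guarded_lang_def kat_lang_def using acc_guarded by blast
  moreover have "deterministic_lang L" unfolding L deterministic_lang_def kat_lang_def
  proof (intro ballI impI)
    fix w w' assume "w \<in> {w. kat_acc \<delta> \<iota> w}" "w' \<in> {w. kat_acc \<delta> \<iota> w}" "w \<noteq> w'"
    then show "\<not> strict_prefix w w' \<and>
      (\<forall>i. i < length w \<and> i < length w' \<and> w ! i \<noteq> w' ! i \<and> (\<forall>j<i. w ! j = w' ! j)
           \<longrightarrow> isl (w ! i) \<and> isl (w' ! i))" using acc_det[of \<delta> \<iota> w w'] by simp
  qed
  moreover have "regular_lang L" unfolding L using kat_regular[OF A] .
  ultimately show "L \<in> {L. guarded_lang L \<and> deterministic_lang L \<and> regular_lang L}" by blast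
next
  fix L :: "('s, 't) letter list set"
  assume "L \<in> {L. guarded_lang L \<and> deterministic_lang L \<and> regular_lang L}"
  then have g: "guarded_lang L" and det: "deterministic_lang L" and r: "regular_lang L" by auto
  from r obtain Q :: "nat set" and q0 :: nat and d :: "nat \<Rightarrow> ('s, 't) letter \<Rightarrow> nat" and F where Q: "finite Q" "q0 \<in> Q" "\<forall>q\<in>Q. \<forall>a. d q a \<in> Q"
    and L: "L = {w. foldl d q0 w \<in> F}" unfolding regular_lang_def by blast
  have "kat_lang (k\<delta> d F) (k\<delta> d F q0) = L"
  proof (intro equalityI subsetI)
    fix w assume "w \<in> kat_lang (k\<delta> d F) (k\<delta> d F q0)"
    then have "kat_acc (k\<delta> d F) (k\<delta> d F q0) w" unfolding kat_lang_def by simp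
    from k_sound[OF this, of q0 "[]"] show "w \<in> L" using L by simp
  next
    fix w assume "w \<in> L"
    then have "kat_acc (k\<delta> d F) (k\<delta> d F (foldl d q0 [])) w"
      using k_complete[OF det L g, of "[]" w] by simp
    then show "w \<in> kat_lang (k\<delta> d F) (k\<delta> d F q0)" unfolding kat_lang_def by simp
  qed
  then show "L \<in> {kat_lang \<delta> \<iota> | (Q :: nat set) (\<delta> :: nat \<Rightarrow> 't set \<Rightarrow> ('s, nat) kat_res) \<iota>.
            kat_automaton Q \<delta> \<iota>}"
    using k_automaton[OF Q, of F] by blast
qed

end
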